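(* Under the standing assumptions below, for every $k\ge1$, with $\widetilde{X'_k}(1)=-\sum_{j=1}^{k}a_jX_{k+1-j}$, $$\mathbb{E}\big[(X_{k+1}-\widetilde{X'_k}(1))^2\big]=\sigma_\varepsilon^2+\sum_{j=k+1}^{\infty}\sum_{l=k+1}^{\infty}a_ja_l\,\sigma(l-j),$$ where the double series converges absolutely.
   Context: Standing assumptions. Let $(X_n)_{n\in\mathbb Z}$ be a real, zero-mean, weakly stationary process in $L^2$ with autocovariance function $\sigma(j)=\mathbb E[X_nX_{n+j}]$, satisfying $\sum_{j\in\mathbb Z}|\sigma(j)|=\infty$. Assume $X_n=\sum_{j\ge0}b_j\varepsilon_{n-j}$ (convergence in $L^2$). Here $(\varepsilon_n)_{n\in\mathbb Z}$ is a sequence of uncorrelated random variables with mean $0$ and variance $\sigma_\varepsilon^2>0$, and $b_0=1$, $\sum_j b_j^2<\infty$. Assume also $\varepsilon_n=\sum_{j\ge0}a_jX_{n-j}$ with $a_0=1$ and $\sum_j|a_j|<\infty$. The power series $A(z)=\sum_{j\ge0}a_jz^j$ and $B(z)=\sum_{j\ge0}b_jz^j$ satisfy $A(z)B(z)=1$ for $|z|\le1$. Fix $d\in(0,1/2)$. Assume that for every $\delta>0$ there exist constants $C_1,C_2$ (depending on $\delta$) such that $|a_j|\le C_1j^{-d-1+\delta}$ and $|b_j|\le C_2j^{d-1+\delta}$ for all $j\ge1$. *)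

theory Defs
  imports "HOL-Probability.Probability"
begin

end

theory Submission
  imports Defs
begin


lemma sq_int_mult:
  fixes f g :: "'w \<Rightarrow> real"
  assumes "f \<in> borel_measurable M" "g \<in> borel_measurable M"
    "integrable M (\<lambda>w. (f w)\<^sup>2)" "integrable M (\<lambda>w. (g w)\<^sup>2)"
  shows "integrable M (\<lambda>w. f w * g w)"
proof (rule Bochner_Integration.integrable_bound[where f="\<lambda>w. (f w)\<^sup>2 + (g w)\<^sup>2"])
  show "integrable M (\<lambda>w. (f w)\<^sup>2 + (g w)\<^sup>2)" using assms by auto
  show "(\<lambda>w. f w * g w) \<in> borel_measurable M" using assms by measurable
  have "\<bar>x * y\<bar> \<le> x\<^sup>2 + y\<^sup>2" for x y :: real
  proof -
    have "0 \<le> (\<bar>x\<bar> - \<bar>y\<bar>)\<^sup>2" by simp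
    hence "2 * \<bar>x\<bar> * \<bar>y\<bar> \<le> x\<^sup>2 + y\<^sup>2" by (simp add: power2_eq_square algebra_simps)
    moreover have "0 \<le> \<bar>x\<bar> * \<bar>y\<bar>" by simp
    ultimately have "\<bar>x\<bar> * \<bar>y\<bar> \<le> x\<^sup>2 + y\<^sup>2" by linarith
    thus ?thesis by (simp add: abs_mult)
  qed
  then show "AE x in M. norm (f x * g x) \<le> norm ((f x)\<^sup>2 + (g x)\<^sup>2)"
    by (auto simp: abs_of_nonneg)
qed

lemma sq_int_sum:
  fixes f :: "'i \<Rightarrow> 'w \<Rightarrow> real"
  assumes "finite I" "\<And>i. i \<in> I \<Longrightarrow> f i \<in> borel_measurable M"
    "\<And>i. i \<in> I \<Longrightarrow> integrable M (\<lambda>w. (f i w)\<^sup>2)"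
  shows "integrable M (\<lambda>w. (\<Sum>i\<in>I. f i w)\<^sup>2)"
proof -
  have "(\<lambda>w. (\<Sum>i\<in>I. f i w)\<^sup>2) = (\<lambda>w. \<Sum>i\<in>I. \<Sum>j\<in>I. f i w * f j w)"
    by (simp add: power2_eq_square sum_product)
  moreover have "integrable M (\<lambda>w. \<Sum>i\<in>I. \<Sum>j\<in>I. f i w * f j w)"
    using assms by (intro Bochner_Integration.integrable_sum) (rule sq_int_mult; auto)
  ultimately show ?thesis by simp
qed

lemma cs_ineq:
  fixes f g :: "'w \<Rightarrow> real"
  assumes "f \<in> borel_measurable M" "g \<in> borel_measurable M"
    "integrable M (\<lambda>w. (f w)\<^sup>2)" "integrable M (\<lambda>w. (g w)\<^sup>2)" "t > 0"
  shows "\<bar>integral\<^sup>L M (\<lambda>w. f w * g w)\<bar> \<le> t * integral\<^sup>L M (\<lambda>w. (f w)\<^sup>2) + integral\<^sup>L M (\<lambda>w. (g w)\<^sup>2) / t"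
proof -
  have pt: "\<bar>x * y\<bar> \<le> t * x\<^sup>2 + y\<^sup>2 / t" for x y :: real
  proof -
    have "0 \<le> (t * \<bar>x\<bar> - \<bar>y\<bar>)\<^sup>2" by simp
    hence h: "2 * (t * (\<bar>x\<bar> * \<bar>y\<bar>)) \<le> t * (t * x\<^sup>2) + y\<^sup>2"
      by (simp add: power2_eq_square algebra_simps)
    have "0 \<le> t * (\<bar>x\<bar> * \<bar>y\<bar>)" using assms(5) by simp
    with h have "t * (\<bar>x\<bar> * \<bar>y\<bar>) \<le> t * (t * x\<^sup>2) + y\<^sup>2" by linarith
    also have "\<dots> = t * (t * x\<^sup>2 + y\<^sup>2 / t)" using assms(5) by (simp add: field_simps)
    finally have "\<bar>x\<bar> * \<bar>y\<bar> \<le> t * x\<^sup>2 + y\<^sup>2 / t"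
      using assms(5) by (simp add: mult_le_cancel_left_pos)
    thus ?thesis by (simp add: abs_mult)
  qed
  have "\<bar>integral\<^sup>L M (\<lambda>w. f w * g w)\<bar> \<le> integral\<^sup>L M (\<lambda>w. \<bar>f w * g w\<bar>)"
    by (rule integral_abs_bound)
  also have "\<dots> \<le> integral\<^sup>L M (\<lambda>w. t * (f w)\<^sup>2 + (g w)\<^sup>2 / t)"
    using assms pt by (intro integral_mono sq_int_mult integrable_abs) auto
  also have "\<dots> = t * integral\<^sup>L M (\<lambda>w. (f w)\<^sup>2) + integral\<^sup>L M (\<lambda>w. (g w)\<^sup>2) / t"
    using assms by simp
  finally show ?thesis .
qed

lemma sq_expand:
  fixes f g :: "'w \<Rightarrow> real"
  assumes "f \<in> borel_measurable M" "g \<in> borel_measurable M"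
    "integrable M (\<lambda>w. (f w)\<^sup>2)" "integrable M (\<lambda>w. (g w)\<^sup>2)"
  shows "integral\<^sup>L M (\<lambda>w. (f w + g w)\<^sup>2) = integral\<^sup>L M (\<lambda>w. (f w)\<^sup>2) + 2 * integral\<^sup>L M (\<lambda>w. f w * g w) + integral\<^sup>L M (\<lambda>w. (g w)\<^sup>2)"
proof -
  have i: "integrable M (\<lambda>w. f w * g w)" using assms by (rule sq_int_mult)
  have "(\<lambda>w. (f w + g w)\<^sup>2) = (\<lambda>w. (f w)\<^sup>2 + 2 * (f w * g w) + (g w)\<^sup>2)"
    by (simp add: power2_eq_square algebra_simps)
  thus ?thesis using assms i by simp
qed

lemma sq_int_scale:
  fixes f :: "'w \<Rightarrow> real"
  assumes "integrable M (\<lambda>w. (f w)\<^sup>2)"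
  shows "integrable M (\<lambda>w. (c * f w)\<^sup>2)"
  using assms by (simp add: power_mult_distrib)

lemma sq_int_diff:
  fixes f g :: "'w \<Rightarrow> real"
  assumes "f \<in> borel_measurable M" "g \<in> borel_measurable M"
    "integrable M (\<lambda>w. (f w)\<^sup>2)" "integrable M (\<lambda>w. (g w)\<^sup>2)"
  shows "integrable M (\<lambda>w. (f w - g w)\<^sup>2)"
proof -
  have i: "integrable M (\<lambda>w. f w * g w)" using assms by (rule sq_int_mult)
  have "(\<lambda>w. (f w - g w)\<^sup>2) = (\<lambda>w. (f w)\<^sup>2 - 2 * (f w * g w) + (g w)\<^sup>2)"
    by (simp add: power2_eq_square algebra_simps)
  thus ?thesis using assms i by simp
qed

lemma orth:
  fixes X eps :: "int \<Rightarrow> 'w \<Rightarrow> real" and b :: "nat \<Rightarrow> real"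
  assumes X_meas: "\<And>n. X n \<in> borel_measurable M"
    and X_L2: "\<And>n. integrable M (\<lambda>\<omega>. (X n \<omega>)\<^sup>2)"
    and eps_meas: "\<And>n. eps n \<in> borel_measurable M"
    and eps_L2: "\<And>n. integrable M (\<lambda>\<omega>. (eps n \<omega>)\<^sup>2)"
    and eps_cov: "\<And>n m. integral\<^sup>L M (\<lambda>\<omega>. eps n \<omega> * eps m \<omega>) = (if n = m then s2 else 0)"
    and s2_pos: "s2 > 0"
    and MA: "(\<lambda>N. integral\<^sup>L M (\<lambda>\<omega>. (X m \<omega> - (\<Sum>j<N. b j * eps (m - int j) \<omega>))\<^sup>2))
                 \<longlonglongrightarrow> 0"
    and mn: "m < n"
  shows "integral\<^sup>L M (\<lambda>\<omega>. eps n \<omega> * X m \<omega>) = 0"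
proof -
  note [measurable] = X_meas eps_meas
  define B where "B N w = (\<Sum>j<N. b j * eps (m - int j) w)" for N w
  define r where "r N = integral\<^sup>L M (\<lambda>\<omega>. (X m \<omega> - B N \<omega>)\<^sup>2)" for N
  have Bm: "B N \<in> borel_measurable M" for N unfolding B_def[abs_def] by measurable
  have B2: "integrable M (\<lambda>w. (B N w)\<^sup>2)" for N
    unfolding B_def by (rule sq_int_sum) (auto intro: sq_int_scale eps_L2)
  have e2: "integral\<^sup>L M (\<lambda>w. (eps n w)\<^sup>2) = s2"
    using eps_cov[of n n] by (simp add: power2_eq_square)
  have zero: "integral\<^sup>L M (\<lambda>w. eps n w * B N w) = 0" for N
  proof -
    have "(\<lambda>w. eps n w * B N w) = (\<lambda>w. \<Sum>j<N. b j * (eps n w * eps (m - int j) w))"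
      unfolding B_def by (simp add: sum_distrib_left algebra_simps)
    moreover have "integral\<^sup>L M (\<lambda>w. \<Sum>j<N. b j * (eps n w * eps (m - int j) w)) = 0"
    proof (subst Bochner_Integration.integral_sum)
      show "integrable M (\<lambda>w. b j * (eps n w * eps (m - int j) w))" for j
        by (intro integrable_mult_right sq_int_mult eps_L2 eps_meas)
      show "(\<Sum>j<N. integral\<^sup>L M (\<lambda>w. b j * (eps n w * eps (m - int j) w))) = 0"
        using mn by (intro sum.neutral) (auto simp: eps_cov)
    qed
    ultimately show ?thesis by simp
  qed
  have bound: "\<bar>integral\<^sup>L M (\<lambda>\<omega>. eps n \<omega> * X m \<omega>)\<bar> \<le> t * s2" if t: "t > 0" for t
  proof -
    have lim: "(\<lambda>N. t * s2 + r N / t) \<longlonglongrightarrow> t * s2 + 0 / t"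
      using MA t unfolding r_def B_def by (intro tendsto_intros) auto
    have ev: "\<bar>integral\<^sup>L M (\<lambda>\<omega>. eps n \<omega> * X m \<omega>)\<bar> \<le> t * s2 + r N / t" for N
    proof -
      have Rm: "(\<lambda>w. X m w - B N w) \<in> borel_measurable M" using Bm by measurable
      have R2: "integrable M (\<lambda>w. (X m w - B N w)\<^sup>2)"
        by (rule sq_int_diff) (auto intro: Bm B2 X_L2)
      have "(\<lambda>w. eps n w * X m w) = (\<lambda>w. eps n w * (X m w - B N w) + eps n w * B N w)"
        by (simp add: algebra_simps)
      hence "integral\<^sup>L M (\<lambda>w. eps n w * X m w) = integral\<^sup>L M (\<lambda>w. eps n w * (X m w - B N w)) + integral\<^sup>L M (\<lambda>w. eps n w * B N w)"
        using Rm R2 Bm B2 by (simp add: sq_int_mult eps_L2)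
      also have "\<dots> = integral\<^sup>L M (\<lambda>w. eps n w * (X m w - B N w))" by (simp add: zero)
      finally show ?thesis
        using cs_ineq[OF eps_meas[of n] Rm eps_L2[of n] R2 t] e2 unfolding r_def by simp
    qed
    show ?thesis
      using tendsto_le[OF trivial_limit_sequentially lim tendsto_const] ev by simp
  qed
  have "\<bar>integral\<^sup>L M (\<lambda>\<omega>. eps n \<omega> * X m \<omega>)\<bar> \<le> 0"
  proof (rule field_le_epsilon)
    fix e :: real assume "e > 0"
    thus "\<bar>integral\<^sup>L M (\<lambda>\<omega>. eps n \<omega> * X m \<omega>)\<bar> \<le> 0 + e"
      using bound[of "e / s2"] s2_pos by simp
  qed
  thus ?thesis by simp
qed



theorem mainTheorem3:
  fixes M :: "'w measure"
    and X eps :: "int \<Rightarrow> 'w \<Rightarrow> real"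
    and sigma :: "int \<Rightarrow> real"
    and a b :: "nat \<Rightarrow> real"
    and s2 d :: real
  assumes prob: "prob_space M"
    and X_meas: "\<And>n. X n \<in> borel_measurable M"
    and X_L2: "\<And>n. integrable M (\<lambda>\<omega>. (X n \<omega>)\<^sup>2)"
    and X_mean: "\<And>n. integral\<^sup>L M (X n) = 0"
    and X_cov: "\<And>n j. integral\<^sup>L M (\<lambda>\<omega>. X n \<omega> * X (n + j) \<omega>) = sigma j"
    and sigma_not_abs: "\<not> ((\<lambda>j. \<bar>sigma j\<bar>) summable_on UNIV)"
    and eps_meas: "\<And>n. eps n \<in> borel_measurable M"
    and eps_L2: "\<And>n. integrable M (\<lambda>\<omega>. (eps n \<omega>)\<^sup>2)"
    and eps_mean: "\<And>n. integral\<^sup>L M (eps n) = 0"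
    and eps_cov: "\<And>n m. integral\<^sup>L M (\<lambda>\<omega>. eps n \<omega> * eps m \<omega>) = (if n = m then s2 else 0)"
    and s2_pos: "s2 > 0"
    and MA: "\<And>n. (\<lambda>N. integral\<^sup>L M (\<lambda>\<omega>. (X n \<omega> - (\<Sum>j<N. b j * eps (n - int j) \<omega>))\<^sup>2))
                 \<longlonglongrightarrow> 0"
    and b0: "b 0 = 1"
    and b_sq: "summable (\<lambda>j. (b j)\<^sup>2)"
    and AR: "\<And>n. (\<lambda>N. integral\<^sup>L M (\<lambda>\<omega>. (eps n \<omega> - (\<Sum>j<N. a j * X (n - int j) \<omega>))\<^sup>2))
                 \<longlonglongrightarrow> 0"
    and a0: "a 0 = 1"
    and a_abs: "summable (\<lambda>j. \<bar>a j\<bar>)"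
    and AB: "\<And>z::complex. norm z \<le> 1 \<Longrightarrow> summable (\<lambda>j. of_real (b j) * z ^ j) \<Longrightarrow>
               (\<Sum>j. of_real (a j) * z ^ j) * (\<Sum>j. of_real (b j) * z ^ j) = 1"
    and d_pos: "0 < d" and d_lt: "d < 1/2"
    and a_decay: "\<And>\<delta>. \<delta> > 0 \<Longrightarrow> \<exists>C1. \<forall>j\<ge>1. \<bar>a j\<bar> \<le> C1 * real j powr (- d - 1 + \<delta>)"
    and b_decay: "\<And>\<delta>. \<delta> > 0 \<Longrightarrow> \<exists>C2. \<forall>j\<ge>1. \<bar>b j\<bar> \<le> C2 * real j powr (d - 1 + \<delta>)"
    and k_ge: "k \<ge> (1::nat)"
  shows "(\<lambda>(j, l). \<bar>a j * a l * sigma (int l - int j)\<bar>) summable_on ({k+1..} \<times> {k+1..})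
     \<and> integral\<^sup>L M (\<lambda>\<omega>. (X (int k + 1) \<omega> - (- (\<Sum>j=1..k. a j * X (int k + 1 - int j) \<omega>)))\<^sup>2)
         = s2 + (\<Sum>\<^sub>\<infinity>(j, l)\<in>{k+1..} \<times> {k+1..}. a j * a l * sigma (int l - int j))"
proof -
  note [measurable] = X_meas eps_meas
  define A :: "nat set" where "A = {k+1..}"
  define g where "g = (\<lambda>(j::nat, l::nat). a j * a l * sigma (int l - int j))"
  define I where "I N = {k+1..<N}" for N :: nat
  define xx where "xx j = X (int k + 1 - int j)" for j :: nat
  have xxm[measurable]: "xx j \<in> borel_measurable M" for j unfolding xx_def by simp
  have xx2: "integrable M (\<lambda>w. (xx j w)\<^sup>2)" for j unfolding xx_def by (rule X_L2)
  have sig0: "integral\<^sup>L M (\<lambda>w. (X n w)\<^sup>2) = sigma 0" for n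
    using X_cov[of n 0] by (simp add: power2_eq_square)
  have sym: "sigma (- m) = sigma m" for m
  proof -
    have "sigma (- m) = integral\<^sup>L M (\<lambda>w. X 0 w * X (- m) w)" using X_cov[of 0 "-m"] by simp
    also have "\<dots> = integral\<^sup>L M (\<lambda>w. X (- m) w * X (- m + m) w)" by (simp add: mult.commute)
    also have "\<dots> = sigma m" by (rule X_cov)
    finally show ?thesis .
  qed
  have sbound: "\<bar>sigma m\<bar> \<le> sigma 0" for m
  proof -
    have c: "integral\<^sup>L M (\<lambda>w. X 0 w * X m w) = sigma m" using X_cov[of 0 m] by simp
    have "0 \<le> integral\<^sup>L M (\<lambda>w. (X 0 w + X m w)\<^sup>2)" by simp
    also have "\<dots> = sigma 0 + 2 * sigma m + sigma 0"
      by (subst sq_expand) (auto simp: sig0 c X_L2)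
    finally have 1: "0 \<le> sigma 0 + 2 * sigma m + sigma 0" .
    have "0 \<le> integral\<^sup>L M (\<lambda>w. (X 0 w + - X m w)\<^sup>2)" by simp
    also have "\<dots> = sigma 0 - 2 * sigma m + sigma 0"
      by (subst sq_expand) (auto simp: sig0 c X_L2)
    finally have 2: "0 \<le> sigma 0 - 2 * sigma m + sigma 0" .
    from 1 2 show ?thesis by linarith
  qed
  have cov_xx: "integral\<^sup>L M (\<lambda>w. xx j w * xx l w) = sigma (int l - int j)" for j l
  proof -
    have "int k + 1 - int l = (int k + 1 - int j) + (int j - int l)" by simp
    hence "integral\<^sup>L M (\<lambda>w. xx j w * xx l w) = sigma (int j - int l)"
      unfolding xx_def by (metis X_cov)
    also have "\<dots> = sigma (- (int l - int j))" by simp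
    also have "\<dots> = sigma (int l - int j)" by (rule sym)
    finally show ?thesis .
  qed
  define SA where "SA = (\<Sum>j. \<bar>a j\<bar>)"
  have abs_g: "(\<lambda>p. \<bar>g p\<bar>) summable_on A \<times> A"
  proof (rule nonneg_bdd_above_summable_on)
    show "bdd_above (sum (\<lambda>p. \<bar>g p\<bar>) ` {F. F \<subseteq> A \<times> A \<and> finite F})"
    proof (rule bdd_aboveI2)
      fix F assume "F \<in> {F. F \<subseteq> A \<times> A \<and> finite F}"
      hence F: "finite F" by auto
      obtain N where N: "fst ` F \<union> snd ` F \<subseteq> {..<N}"
        using finite_nat_bounded[of "fst ` F \<union> snd ` F"] F by auto
      have FN: "F \<subseteq> {..<N} \<times> {..<N}" using N by force
      have s1: "sum (\<lambda>p. \<bar>g p\<bar>) F \<le> sum (\<lambda>p. \<bar>g p\<bar>) ({..<N} \<times> {..<N})"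
        by (rule sum_mono2) (use FN in auto)
      have s2: "sum (\<lambda>p. \<bar>g p\<bar>) ({..<N} \<times> {..<N}) = (\<Sum>j<N. \<Sum>l<N. \<bar>g (j, l)\<bar>)"
        by (simp add: sum.cartesian_product)
      have s3: "(\<Sum>j<N. \<Sum>l<N. \<bar>g (j, l)\<bar>) \<le> (\<Sum>j<N. \<Sum>l<N. sigma 0 * (\<bar>a j\<bar> * \<bar>a l\<bar>))"
      proof (intro sum_mono)
        fix j l
        have "\<bar>g (j, l)\<bar> = (\<bar>a j\<bar> * \<bar>a l\<bar>) * \<bar>sigma (int l - int j)\<bar>"
          by (simp add: g_def abs_mult)
        also have "\<dots> \<le> (\<bar>a j\<bar> * \<bar>a l\<bar>) * sigma 0"
          by (rule mult_left_mono) (auto simp: sbound)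
        finally show "\<bar>g (j, l)\<bar> \<le> sigma 0 * (\<bar>a j\<bar> * \<bar>a l\<bar>)" by (simp add: mult.commute)
      qed
      have s4a: "sigma 0 * (\<Sum>j<N. \<bar>a j\<bar>)\<^sup>2 = sigma 0 * (\<Sum>j<N. \<Sum>l<N. \<bar>a j\<bar> * \<bar>a l\<bar>)"
        by (simp add: power2_eq_square sum_product)
      have s4b: "sigma 0 * (\<Sum>j<N. \<Sum>l<N. \<bar>a j\<bar> * \<bar>a l\<bar>) = (\<Sum>j<N. \<Sum>l<N. sigma 0 * (\<bar>a j\<bar> * \<bar>a l\<bar>))"
        by (simp add: sum_distrib_left)
      have s5: "sigma 0 * (\<Sum>j<N. \<bar>a j\<bar>)\<^sup>2 \<le> sigma 0 * SA\<^sup>2"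
      proof (rule mult_left_mono)
        show "0 \<le> sigma 0" using sbound[of 0] by simp
        have "(\<Sum>j<N. \<bar>a j\<bar>) \<le> SA" unfolding SA_def
          by (rule sum_le_suminf) (use a_abs in auto)
        moreover have "0 \<le> (\<Sum>j<N. \<bar>a j\<bar>)" by (simp add: sum_nonneg)
        ultimately show "(\<Sum>j<N. \<bar>a j\<bar>)\<^sup>2 \<le> SA\<^sup>2" by (rule power_mono)
      qed
      show "sum (\<lambda>p. \<bar>g p\<bar>) F \<le> sigma 0 * SA\<^sup>2"
        using s1 s2 s3 s4a s4b s5 by linarith
    qed
  qed simp
  have goal1: "(\<lambda>(j, l). \<bar>a j * a l * sigma (int l - int j)\<bar>) summable_on ({k+1..} \<times> {k+1..})"
  proof -
    have "(\<lambda>(j, l). \<bar>a j * a l * sigma (int l - int j)\<bar>) = (\<lambda>p. \<bar>g p\<bar>)"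
      by (rule ext) (auto simp: g_def split: prod.splits)
    thus ?thesis using abs_g by (simp add: A_def)
  qed
  have gsum: "g summable_on A \<times> A"
    using abs_g by (subst summable_on_iff_abs_summable_on_real) simp
  have fl: "filterlim (\<lambda>N. I N \<times> I N) (finite_subsets_at_top (A \<times> A)) sequentially"
  proof (subst filterlim_finite_subsets_at_top, intro allI impI, elim conjE)
    fix F assume F: "finite F" "F \<subseteq> A \<times> A"
    obtain N0 where N0: "fst ` F \<union> snd ` F \<subseteq> {..<N0}"
      using finite_nat_bounded[of "fst ` F \<union> snd ` F"] F by auto
    show "\<forall>\<^sub>F N in sequentially. finite (I N \<times> I N) \<and> F \<subseteq> I N \<times> I N \<and> I N \<times> I N \<subseteq> A \<times> A"
    proof (rule eventually_sequentiallyI[of N0])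
      fix N assume "N0 \<le> N"
      thus "finite (I N \<times> I N) \<and> F \<subseteq> I N \<times> I N \<and> I N \<times> I N \<subseteq> A \<times> A"
        using N0 F unfolding I_def A_def by force
    qed
  qed
  have Flim: "(\<lambda>N. sum g (I N \<times> I N)) \<longlonglongrightarrow> infsum g (A \<times> A)"
    using filterlim_compose[OF has_sum_infsum[OF gsum, unfolded has_sum_def] fl] .
  define e where "e = eps (int k + 1)"
  define Y where "Y w = X (int k + 1) w - (- (\<Sum>j=1..k. a j * X (int k + 1 - int j) w))" for w
  define T where "T N w = (\<Sum>j\<in>I N. a j * xx j w)" for N w
  define S where "S N w = (\<Sum>j<N. a j * X (int k + 1 - int j) w)" for N w
  define D where "D N w = e w - S N w" for N w
  define Q where "Q = integral\<^sup>L M (\<lambda>w. (Y w)\<^sup>2)"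
  define r where "r N = integral\<^sup>L M (\<lambda>w. (D N w)\<^sup>2)" for N
  have em[measurable]: "e \<in> borel_measurable M" unfolding e_def by simp
  have Ym[measurable]: "Y \<in> borel_measurable M" unfolding Y_def[abs_def] by measurable
  have Tm[measurable]: "T N \<in> borel_measurable M" for N unfolding T_def[abs_def] by measurable
  have Sm[measurable]: "S N \<in> borel_measurable M" for N unfolding S_def[abs_def] by measurable
  have Dm[measurable]: "D N \<in> borel_measurable M" for N unfolding D_def[abs_def] by measurable
  have e2: "integrable M (\<lambda>w. (e w)\<^sup>2)" unfolding e_def by (rule eps_L2)
  have T2: "integrable M (\<lambda>w. (T N w)\<^sup>2)" for N
    unfolding T_def by (rule sq_int_sum) (auto intro: sq_int_scale xx2 simp: I_def)
  have S2: "integrable M (\<lambda>w. (S N w)\<^sup>2)" for N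
    unfolding S_def by (rule sq_int_sum) (auto intro: sq_int_scale X_L2)
  have D2: "integrable M (\<lambda>w. (D N w)\<^sup>2)" for N
    unfolding D_def by (rule sq_int_diff) (auto intro: e2 S2)
  have Y2: "integrable M (\<lambda>w. (Y w)\<^sup>2)"
  proof -
    have "integrable M (\<lambda>w. (X (int k + 1) w - (- (\<Sum>j=1..k. a j * X (int k + 1 - int j) w)))\<^sup>2)"
    proof (rule sq_int_diff)
      have "integrable M (\<lambda>w. (\<Sum>j=1..k. a j * X (int k + 1 - int j) w)\<^sup>2)"
        by (rule sq_int_sum) (auto intro: sq_int_scale X_L2)
      thus "integrable M (\<lambda>w. (- (\<Sum>j=1..k. a j * X (int k + 1 - int j) w))\<^sup>2)" by simp
    qed (auto intro: X_L2)
    thus ?thesis unfolding Y_def .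
  qed
  have e_sq: "integral\<^sup>L M (\<lambda>w. (e w)\<^sup>2) = s2"
    using eps_cov[of "int k + 1" "int k + 1"] unfolding e_def by (simp add: power2_eq_square)
  have SYT: "S N w = Y w + T N w" if N: "N \<ge> k + 1" for N w
  proof -
    let ?f = "\<lambda>j. a j * X (int k + 1 - int j) w"
    have "S N w = sum ?f {0..<k+1} + sum ?f {k+1..<N}"
      unfolding S_def using N
      by (simp only: lessThan_atLeast0 sum.atLeastLessThan_concat[of 0 "k+1" N, symmetric])
    also have "sum ?f {0..<k+1} = ?f 0 + sum ?f {Suc 0..<k+1}"
      by (rule sum.atLeast_Suc_lessThan) simp
    also have "{Suc 0..<k+1} = {1..k}" by auto
    finally show ?thesis unfolding Y_def T_def I_def xx_def using a0 by simp
  qed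
  have c_eq: "integral\<^sup>L M (\<lambda>w. (e w + - T N w)\<^sup>2) = s2 + sum g (I N \<times> I N)" for N
  proof -
    have mT: "(\<lambda>w. - T N w) \<in> borel_measurable M" by measurable
    have mT2: "integrable M (\<lambda>w. (- T N w)\<^sup>2)" using T2 by simp
    have cross: "integral\<^sup>L M (\<lambda>w. e w * - T N w) = 0"
    proof -
      have "(\<lambda>w. e w * - T N w) = (\<lambda>w. \<Sum>j\<in>I N. - a j * (e w * xx j w))"
        unfolding T_def by (simp add: sum_distrib_left algebra_simps sum_negf)
      moreover have "integral\<^sup>L M (\<lambda>w. \<Sum>j\<in>I N. - a j * (e w * xx j w)) = 0"
      proof (subst Bochner_Integration.integral_sum)
        show "integrable M (\<lambda>w. - a j * (e w * xx j w))" for j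
          by (intro integrable_mult_right sq_int_mult e2 xx2 em xxm)
        show "(\<Sum>j\<in>I N. integral\<^sup>L M (\<lambda>w. - a j * (e w * xx j w))) = 0"
        proof (intro sum.neutral ballI)
          fix j assume "j \<in> I N"
          hence j: "j \<ge> 1" unfolding I_def using k_ge by auto
          have "integral\<^sup>L M (\<lambda>w. eps (int k + 1) w * X (int k + 1 - int j) w) = 0"
            by (rule orth[OF X_meas X_L2 eps_meas eps_L2 eps_cov s2_pos MA]) (use j in simp)
          thus "integral\<^sup>L M (\<lambda>w. - a j * (e w * xx j w)) = 0"
            unfolding e_def xx_def by simp
        qed
      qed
      ultimately show ?thesis by simp
    qed
    have TT: "integral\<^sup>L M (\<lambda>w. (- T N w)\<^sup>2) = sum g (I N \<times> I N)"
    proof -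
      have "(\<lambda>w. (- T N w)\<^sup>2) = (\<lambda>w. \<Sum>j\<in>I N. \<Sum>l\<in>I N. (a j * a l) * (xx j w * xx l w))"
        unfolding T_def by (simp add: power2_eq_square sum_product algebra_simps)
      hence "integral\<^sup>L M (\<lambda>w. (- T N w)\<^sup>2) = (\<Sum>j\<in>I N. \<Sum>l\<in>I N. (a j * a l) * integral\<^sup>L M (\<lambda>w. xx j w * xx l w))"
        by (simp add: Bochner_Integration.integral_sum Bochner_Integration.integrable_sum sq_int_mult xx2)
      also have "\<dots> = (\<Sum>j\<in>I N. \<Sum>l\<in>I N. g (j, l))" by (simp add: cov_xx g_def)
      also have "\<dots> = sum g (I N \<times> I N)" by (simp add: sum.cartesian_product I_def)
      finally show ?thesis .
    qed
    show ?thesis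
    proof -
      have cross2: "integral\<^sup>L M (\<lambda>w. e w * T N w) = 0" using cross by simp
      have TT2: "integral\<^sup>L M (\<lambda>w. (T N w)\<^sup>2) = sum g (I N \<times> I N)" using TT by simp
      show ?thesis by (subst sq_expand[OF em mT e2 mT2]) (simp add: e_sq cross2 TT2)
    qed
  qed
  have r_lim: "r \<longlonglongrightarrow> 0"
    using AR[of "int k + 1"] unfolding r_def D_def S_def e_def .
  have Q_nonneg: "Q \<ge> 0" unfolding Q_def by simp
  define L where "L = s2 + infsum g (A \<times> A)"
  have c_lim: "(\<lambda>N. s2 + sum g (I N \<times> I N)) \<longlonglongrightarrow> L"
    unfolding L_def by (intro tendsto_intros Flim)
  have bound: "\<bar>L - Q\<bar> \<le> 2 * t * Q" if t: "t > 0" for t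
  proof -
    have ev: "\<bar>s2 + sum g (I N \<times> I N) - Q\<bar> \<le> 2 * t * Q + (1 + 2 / t) * r N" if N: "N \<ge> k + 1" for N
    proof -
      have pw: "e w + - T N w = Y w + D N w" for w
        using SYT[OF N, of w] unfolding D_def by (simp add: algebra_simps)
      have "(\<lambda>w. (e w + - T N w)\<^sup>2) = (\<lambda>w. (Y w + D N w)\<^sup>2)"
        by (simp only: pw)
      hence "s2 + sum g (I N \<times> I N) = integral\<^sup>L M (\<lambda>w. (Y w + D N w)\<^sup>2)"
        using c_eq[of N] by metis
      also have "\<dots> = Q + 2 * integral\<^sup>L M (\<lambda>w. Y w * D N w) + r N"
        unfolding Q_def r_def by (rule sq_expand[OF Ym Dm Y2 D2])
      finally have eq: "s2 + sum g (I N \<times> I N) - Q = 2 * integral\<^sup>L M (\<lambda>w. Y w * D N w) + r N" by simp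
      have cs: "\<bar>integral\<^sup>L M (\<lambda>w. Y w * D N w)\<bar> \<le> t * Q + r N / t"
        unfolding Q_def r_def by (rule cs_ineq[OF Ym Dm Y2 D2 t])
      have "r N \<ge> 0" unfolding r_def by simp
      hence "\<bar>2 * integral\<^sup>L M (\<lambda>w. Y w * D N w) + r N\<bar> \<le> 2 * (t * Q + r N / t) + r N"
        using cs by (smt (verit))
      also have "\<dots> = 2 * t * Q + (1 + 2 / t) * r N" by (simp add: field_simps)
      finally show ?thesis using eq by simp
    qed
    have lim1: "(\<lambda>N. \<bar>s2 + sum g (I N \<times> I N) - Q\<bar>) \<longlonglongrightarrow> \<bar>L - Q\<bar>"
      by (intro tendsto_intros c_lim)
    have lim2: "(\<lambda>N. 2 * t * Q + (1 + 2 / t) * r N) \<longlonglongrightarrow> 2 * t * Q + (1 + 2 / t) * 0"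
      by (intro tendsto_intros r_lim)
    show ?thesis
      using tendsto_le[OF trivial_limit_sequentially lim2 lim1] ev
      by (simp add: eventually_sequentially) blast
  qed
  have "\<bar>L - Q\<bar> \<le> 0"
  proof (rule field_le_epsilon)
    fix eps0 :: real assume ep: "eps0 > 0"
    have "\<bar>L - Q\<bar> \<le> 2 * (eps0 / (2 * Q + 1)) * Q"
      using bound[of "eps0 / (2 * Q + 1)"] ep Q_nonneg by simp
    also have "\<dots> \<le> eps0"
    proof -
      have "2 * (eps0 / (2 * Q + 1)) * Q = eps0 * (2 * Q / (2 * Q + 1))" by simp
      also have "\<dots> \<le> eps0 * 1"
        using ep Q_nonneg by (intro mult_left_mono) auto
      finally show ?thesis by simp
    qed
    finally show "\<bar>L - Q\<bar> \<le> 0 + eps0" by simp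
  qed
  hence "Q = L" by simp
  thus ?thesis using goal1 unfolding Q_def L_def Y_def g_def A_def by simp
qed

end
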